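(* For $l\in\mathbb N$, $a>0$ and $b>0$, $$\sum_{k=0}^{l-1}\binom{k+l}{l}\frac{a^kb^l+a^lb^k}{(a+b)^{k+l}(k+l)}=\frac1l.$$ *)

theory Defs
  imports Complex_Main
begin

end

theory Submission
  imports Defs
begin

lemma L1:
  fixes x y :: real and m :: nat
  shows "(\<Sum>k\<le>m. real ((m + k) choose k) * x^k * (x+y)^(m-k))
       = (\<Sum>k\<le>m. real ((2*m+1) choose k) * x^k * y^(m-k))"
proof -
  have e1: "(real m + (real m + 1) gchoose k) = real ((2*m+1) choose k)" for k
    using binomial_gbinomial[of "2*m+1" k, where 'a=real] by (simp add: add_ac)
  have e2: "(real k + (real m + 1) - 1 gchoose k) = real ((m+k) choose k)" for k
    using binomial_gbinomial[of "m+k" k, where 'a=real] by (simp add: add.commute)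
  show ?thesis
    using gbinomial_partial_sum_poly_xpos[of m "real m + 1" x y]
    unfolding e1 e2 by simp
qed

lemma L2:
  fixes x y :: real and m :: nat
  shows "(\<Sum>k\<le>m. real ((m + k) choose k) * x^k * y^(m+1) * (x+y)^(m-k))
       = (\<Sum>k\<le>m. real ((2*m+1) choose k) * x^k * y^(2*m+1-k))"
proof -
  have "(\<Sum>k\<le>m. real ((m + k) choose k) * x^k * y^(m+1) * (x+y)^(m-k))
      = y^(m+1) * (\<Sum>k\<le>m. real ((m + k) choose k) * x^k * (x+y)^(m-k))"
    by (simp add: sum_distrib_left algebra_simps)
  also have "\<dots> = y^(m+1) * (\<Sum>k\<le>m. real ((2*m+1) choose k) * x^k * y^(m-k))"
    by (simp add: L1)
  also have "\<dots> = (\<Sum>k\<le>m. real ((2*m+1) choose k) * x^k * y^(2*m+1-k))"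
    unfolding sum_distrib_left
  proof (rule sum.cong)
    fix k assume "k \<in> {..m}"
    then have "2*m+1-k = (m+1) + (m-k)" by auto
    then have "y^(2*m+1-k) = y^(m+1) * y^(m-k)" by (simp only: power_add)
    then show "y ^ (m + 1) * (real (2 * m + 1 choose k) * x ^ k * y ^ (m - k)) =
         real (2 * m + 1 choose k) * x ^ k * y ^ (2 * m + 1 - k)"
      by simp
  qed simp
  finally show ?thesis .
qed

lemma L3:
  fixes a b :: real and m :: nat
  shows "(\<Sum>k\<le>m. real ((2*m+1) choose k) * a^k * b^(2*m+1-k))
       + (\<Sum>k\<le>m. real ((2*m+1) choose k) * b^k * a^(2*m+1-k)) = (a+b)^(2*m+1)"
proof -
  have r: "(\<Sum>k\<le>m. real ((2*m+1) choose k) * b^k * a^(2*m+1-k))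
      = (\<Sum>j=Suc m..m+(m+1). real ((2*m+1) choose j) * a^j * b^(2*m+1-j))"
  proof (rule sum.reindex_bij_witness[where i="\<lambda>j. 2*m+1-j" and j="\<lambda>k. 2*m+1-k"])
    fix k assume k: "k \<in> {..m}"
    have e: "(2*m+1) choose (2*m+1-k) = (2*m+1) choose k"
      using k by (intro binomial_symmetric[symmetric]) auto
    have f: "2*m+1-(2*m+1-k) = k" using k by auto
    show "real ((2*m+1) choose (2*m+1-k)) * a^(2*m+1-k) * b^(2*m+1-(2*m+1-k))
       = real ((2*m+1) choose k) * b^k * a^(2*m+1-k)"
      unfolding e f by simp
  qed auto
  have "(a+b)^(2*m+1) = (\<Sum>k\<le>m+(m+1). real ((2*m+1) choose k) * a^k * b^(2*m+1-k))"
  proof -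
    have eq: "m+(m+1) = 2*m+1" by simp
    show ?thesis unfolding eq by (rule binomial_ring)
  qed
  also have "\<dots> = (\<Sum>k\<le>m. real ((2*m+1) choose k) * a^k * b^(2*m+1-k))
      + (\<Sum>j=Suc m..m+(m+1). real ((2*m+1) choose j) * a^j * b^(2*m+1-j))"
    by (rule sum_up_index_split)
  finally show ?thesis using r by simp
qed

theorem lemma2p2:
  fixes l :: nat and a b :: real
  assumes "l \<ge> 1" and "a > 0" and "b > 0"
  shows "(\<Sum>k=0..<l. real ((k + l) choose l) *
            (a ^ k * b ^ l + a ^ l * b ^ k) / ((a + b) ^ (k + l) * real (k + l))) = 1 / real l"
proof -
  obtain m where l: "l = Suc m" using assms(1) by (cases l) auto
  have ab: "a + b > 0" using assms by simp
  have "(\<Sum>k=0..<l. real ((k + l) choose l) *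
            (a ^ k * b ^ l + a ^ l * b ^ k) / ((a + b) ^ (k + l) * real (k + l)))
     = (\<Sum>k\<le>m. (real ((m + k) choose k) * a^k * b^(m+1) * (a+b)^(m-k)
               + real ((m + k) choose k) * b^k * a^(m+1) * (a+b)^(m-k)) / ((a+b)^(2*m+1) * real l))"
  proof (rule sum.cong)
    show "{0..<l} = {..m}" using l by auto
  next
    fix k assume "k \<in> {..m}"
    then have km: "k \<le> m" by simp
    have c: "real ((k + l) choose l) * real l = real (k + l) * real ((m + k) choose k)"
    proof -
      have "Suc m * (Suc (k+m) choose Suc m) = Suc (k+m) * ((k+m) choose m)"
        by (rule Suc_times_binomial)
      moreover have "(k+m) choose m = (m+k) choose k"
        using binomial_symmetric[of m "k+m"] by (simp add: add.commute)
      ultimately have "l * ((k + l) choose l) = (k + l) * ((m + k) choose k)"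
        using l by simp
      then show ?thesis by (metis mult.commute of_nat_mult)
    qed
    have "2*m+1 = (k+l) + (m-k)" using km l by simp
    then have p: "(a+b)^(2*m+1) = (a+b)^(k+l) * (a+b)^(m-k)"
      by (simp only: power_add)
    have kl: "real (k + l) > 0" using l by simp
    have cc: "real ((k + l) choose l) / real (k + l) = real ((m + k) choose k) / real l"
      using c kl l by (simp add: divide_simps)
    define X where "X = a ^ k * b ^ l + a ^ l * b ^ k"
    define C where "C = real ((m + k) choose k)"
    have q: "(a+b)^(m-k) > 0" using ab by simp
    have "real ((k + l) choose l) * X / ((a + b) ^ (k + l) * real (k + l))
        = (real ((k + l) choose l) / real (k + l)) * X / (a + b) ^ (k + l)"
      by simp
    also have "\<dots> = C / real l * X / (a + b) ^ (k + l)" unfolding cc C_def ..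
    also have "\<dots> = (C * X * (a+b)^(m-k)) / (((a + b) ^ (k + l) * (a+b)^(m-k)) * real l)"
    proof -
      have g: "\<And>P Q L::real. Q \<noteq> 0 \<Longrightarrow> C / L * X / P = C * X * Q / (P * Q * L)"
        by simp
      show ?thesis by (rule g) (use ab in auto)
    qed
    also have "\<dots> = (C * a^k * b^(m+1) * (a+b)^(m-k) + C * b^k * a^(m+1) * (a+b)^(m-k))
         / ((a+b)^(2*m+1) * real l)"
      unfolding p X_def l by (simp add: algebra_simps)
    finally show "real ((k + l) choose l) *
            (a ^ k * b ^ l + a ^ l * b ^ k) / ((a + b) ^ (k + l) * real (k + l))
      = (real ((m + k) choose k) * a^k * b^(m+1) * (a+b)^(m-k)
               + real ((m + k) choose k) * b^k * a^(m+1) * (a+b)^(m-k)) / ((a+b)^(2*m+1) * real l)"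
      unfolding X_def C_def .
  qed
  also have "\<dots> = ((\<Sum>k\<le>m. real ((m + k) choose k) * a^k * b^(m+1) * (a+b)^(m-k))
       + (\<Sum>k\<le>m. real ((m + k) choose k) * b^k * a^(m+1) * (b+a)^(m-k))) / ((a+b)^(2*m+1) * real l)"
    by (simp only: add.commute[of b a] add_divide_distrib sum.distrib sum_divide_distrib)
  also have "\<dots> = (a+b)^(2*m+1) / ((a+b)^(2*m+1) * real l)"
    unfolding L2 using L3 by simp
  also have "\<dots> = 1 / real l" using ab by simp
  finally show ?thesis .
qed

end
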